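(* Consider BSPR networks with $K$ relays, $K=1,2,\dots$. Suppose that for each $K$ there exists $\mathcal M\subseteq\{1,\dots,K\}$ such that $|\mathcal M|\,(0.5-p_{\textnormal{MAX}(\mathcal M)})^2\to\infty$ as $K\to\infty$, where $p_{\textnormal{MAX}(\mathcal M)}=\max_{m\in\mathcal M}p_m$ and $p_i=p_{s,i}(1-p_{i,d})+(1-p_{s,i})p_{i,d}$. Then for any $\epsilon>0$ and any rate $R<1$, uncoded transmission with forwarding relays achieves average error probability $P_e\le\epsilon$ for sufficiently large $n$ and $K$.
   Context: BSPR network with $K$ relays: at each network use $t$ the source sends $U[t]\in\{0,1\}$; relay $i$ receives $V_i[t]=U[t]\oplus Z_i[t]$, $\Pr\{Z_i=1\}=p_{s,i}\in[0,1/2]$; relay $i$ sends $X_i[t]$ and the destination receives $Y_i[t]=X_i[t]\oplus E_i[t]$, $\Pr\{E_i=1\}=p_{i,d}\in[0,1/2]$; all noises mutually independent and i.i.d. over time. Uncoded transmission with forwarding relays: the message is $W=(W_1,\dots,W_n)$ with i.i.d. uniform bits; the source sends $U[t]=W_t$; each relay forwards, $X_i[t+1]=V_i[t]$ ($X_i[1]=0$); $n$ bits are sent in $n+1$ network uses (rate $n/(n+1)$), and the destination estimates each bit $W_t$ from its received symbols $(Y_1[t+1],\dots,Y_K[t+1])$ using a suitable decoding rule. $P_e$ is the probability of erroneous decoding at the destination. *)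

theory Defs
  imports "HOL-Probability.Probability"
begin

text \<open>BSPR network with K relays (indexed 1..K), uncoded transmission of n bits
  W_1..W_n in network uses t = 1..n+1 with forwarding relays.
  Sample space: message bits w (w t = W_t for t in 1..n), source-relay noises
  z (t,i) = Z_i[t], relay-destination noises e (t,i) = E_i[t], for t in 1..n+1.
  Bits are booleans, xor is inequality.\<close>

definition net_pmf :: "nat \<Rightarrow> nat \<Rightarrow> (nat \<Rightarrow> real) \<Rightarrow> (nat \<Rightarrow> real)
    \<Rightarrow> ((nat \<Rightarrow> bool) \<times> (nat \<times> nat \<Rightarrow> bool) \<times> (nat \<times> nat \<Rightarrow> bool)) pmf" where
  "net_pmf K n ps pd =
     pair_pmf (Pi_pmf {1..n} False (\<lambda>_. bernoulli_pmf (1/2)))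
       (pair_pmf (Pi_pmf ({1..n+1} \<times> {1..K}) False (\<lambda>(t,i). bernoulli_pmf (ps i)))
                 (Pi_pmf ({1..n+1} \<times> {1..K}) False (\<lambda>(t,i). bernoulli_pmf (pd i))))"

text \<open>Source sends U[t] = W_t (for t = n+1 the value is the default False).\<close>
definition src_sig :: "(nat \<Rightarrow> bool) \<Rightarrow> nat \<Rightarrow> bool" where
  "src_sig w t = w t"

definition relay_in :: "(nat \<Rightarrow> bool) \<Rightarrow> (nat \<times> nat \<Rightarrow> bool) \<Rightarrow> nat \<Rightarrow> nat \<Rightarrow> bool" where
  "relay_in w z i t = (src_sig w t \<noteq> z (t, i))"

definition relay_out :: "(nat \<Rightarrow> bool) \<Rightarrow> (nat \<times> nat \<Rightarrow> bool) \<Rightarrow> nat \<Rightarrow> nat \<Rightarrow> bool" where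
  "relay_out w z i t = (if t \<le> 1 then False else relay_in w z i (t - 1))"

definition dest_in :: "(nat \<Rightarrow> bool) \<Rightarrow> (nat \<times> nat \<Rightarrow> bool) \<Rightarrow> (nat \<times> nat \<Rightarrow> bool)
    \<Rightarrow> nat \<Rightarrow> nat \<Rightarrow> bool" where
  "dest_in w z e i t = (relay_out w z i t \<noteq> e (t, i))"

definition received :: "nat \<Rightarrow> (nat \<Rightarrow> bool) \<Rightarrow> (nat \<times> nat \<Rightarrow> bool) \<Rightarrow> (nat \<times> nat \<Rightarrow> bool)
    \<Rightarrow> nat \<Rightarrow> (nat \<Rightarrow> bool)" where
  "received K w z e t = (\<lambda>i. if i \<in> {1..K} then dest_in w z e i (t + 1) else False)"

definition bit_error :: "nat \<Rightarrow> nat \<Rightarrow> (nat \<Rightarrow> real) \<Rightarrow> (nat \<Rightarrow> real)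
    \<Rightarrow> ((nat \<Rightarrow> bool) \<Rightarrow> bool) \<Rightarrow> nat \<Rightarrow> real" where
  "bit_error K n ps pd dec t =
     measure_pmf.prob (net_pmf K n ps pd) {(w, z, e). dec (received K w z e t) \<noteq> w t}"

definition avg_error :: "nat \<Rightarrow> nat \<Rightarrow> (nat \<Rightarrow> real) \<Rightarrow> (nat \<Rightarrow> real)
    \<Rightarrow> ((nat \<Rightarrow> bool) \<Rightarrow> bool) \<Rightarrow> real" where
  "avg_error K n ps pd dec = (\<Sum>t = 1..n. bit_error K n ps pd dec t) / real n"

definition p_end :: "(nat \<Rightarrow> real) \<Rightarrow> (nat \<Rightarrow> real) \<Rightarrow> nat \<Rightarrow> real" where
  "p_end ps pd i = ps i * (1 - pd i) + (1 - ps i) * pd i"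

end

theory Submission
  imports Defs
begin

lemma hoeff_bern:
  assumes fin: "finite A" and ne: "A \<noteq> {}" and q: "\<And>i. i\<in>A \<Longrightarrow> 0 \<le> q i \<and> q i \<le> 1"
    and e: "e \<ge> 0"
  shows "measure_pmf.prob (Pi_pmf A False (\<lambda>i. bernoulli_pmf (q i)))
           {f. (\<Sum>i\<in>A. q i) + e \<le> real (card {i\<in>A. f i})} \<le> exp (-2*e\<^sup>2/ real (card A))"
proof -
  define P where "P = Pi_pmf A False (\<lambda>i. bernoulli_pmf (q i))"
  have ex: "measure_pmf.expectation P (\<lambda>f. if f i then 1 else 0 :: real) = q i" if i: "i \<in> A" for i
  proof -
    have "measure_pmf.expectation P (\<lambda>f. if f i then 1 else 0 :: real) =
        measure_pmf.expectation (map_pmf (\<lambda>f. f i) P) (\<lambda>b. if b then 1 else 0 :: real)"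
      by simp
    also have "map_pmf (\<lambda>f. f i) P = bernoulli_pmf (q i)"
      using i fin by (simp add: P_def Pi_pmf_component)
    also have "measure_pmf.expectation \<dots> (\<lambda>b. if b then 1 else 0) = q i"
      using q[OF i] by simp
    finally show ?thesis .
  qed
  interpret H: Hoeffding_ineq "measure_pmf P" A "\<lambda>i f. if f i then 1 else 0" "\<lambda>_. 0" "\<lambda>_. 1"
     "\<Sum>i\<in>A. measure_pmf.expectation P (\<lambda>f. if f i then 1 else 0 :: real)"
  proof unfold_locales
    show "prob_space.indep_vars (measure_pmf P) (\<lambda>_. borel) (\<lambda>i f. if f i then 1 else 0 :: real) A"
      unfolding P_def
      by (intro prob_space.indep_vars_compose2[OF _ indep_vars_Pi_pmf])
         (auto simp: measure_pmf.prob_space_axioms fin)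
  qed (auto simp: fin)
  have "measure_pmf.prob P {x\<in>space (measure_pmf P). (\<Sum>i\<in>A. (if x i then 1 else 0)) \<ge> (\<Sum>i\<in>A. measure_pmf.expectation P (\<lambda>f. if f i then 1 else 0 :: real)) + e}
       \<le> exp (-2 * e\<^sup>2 / (\<Sum>i\<in>A. (1 - 0)\<^sup>2))"
    by (rule H.Hoeffding_ineq_ge) (use e fin ne in auto)
  moreover have "(\<Sum>i\<in>A. (if x i then 1 else 0 :: real)) = real (card {i\<in>A. x i})" for x
  proof -
    have "(\<Sum>i\<in>A. if x i then 1 else (0::real)) = (\<Sum>i\<in>{i\<in>A. x i}. 1)"
      using fin by (intro sum.mono_neutral_cong_right) auto
    thus ?thesis by simp
  qed
  moreover have "(\<Sum>i\<in>A. measure_pmf.expectation P (\<lambda>f. if f i then 1 else 0 :: real)) = (\<Sum>i\<in>A. q i)"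
    using ex by simp
  ultimately show ?thesis by (simp add: P_def)
qed

lemma Pi_pmf_proj_aux:
  assumes "finite A" 
  shows "finite B \<Longrightarrow> inj_on g A \<Longrightarrow> g ` A \<subseteq> B \<Longrightarrow>
    map_pmf (\<lambda>f i. if i \<in> A then f (g i) else d) (Pi_pmf B d p) = Pi_pmf A d (\<lambda>i. p (g i))"
  using assms
proof (induction A arbitrary: B rule: finite_induct)
  case empty
  then show ?case by (simp add: map_pmf_const)
next
  case (insert x A)
  define B' where "B' = B - {g x}"
  have gx: "g x \<in> B" "g x \<notin> g ` A" using insert by auto
  have B1: "B = insert (g x) B'" using gx by (auto simp: B'_def)
  have B: "g x \<notin> B'" "finite B'" using insert.prems by (auto simp: B'_def)
  have IH: "map_pmf (\<lambda>f i. if i \<in> A then f (g i) else d) (Pi_pmf B' d p) = Pi_pmf A d (\<lambda>i. p (g i))"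
    proof (rule insert.IH)
    show "g ` A \<subseteq> B'" using insert.prems gx unfolding B'_def by blast
  qed (use insert B in auto)
  have eq: "(\<lambda>i. if i \<in> insert x A then (f(g x := y)) (g i) else d) =
        (\<lambda>i. if i \<in> A then f (g i) else d)(x := y)" for f y
    using gx insert.hyps by (auto simp: fun_eq_iff) (metis imageI)
  have "Pi_pmf B d p = map_pmf (\<lambda>(y,f). f(g x:=y)) (pair_pmf (p (g x)) (Pi_pmf B' d p))"
    unfolding B1 by (rule Pi_pmf_insert) (use B in auto)
  have PB: "Pi_pmf B d p = map_pmf (\<lambda>(y,f). f(g x:=y)) (pair_pmf (p (g x)) (Pi_pmf B' d p))" by fact
  have "map_pmf (\<lambda>f i. if i \<in> insert x A then f (g i) else d) (Pi_pmf B d p)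
     = map_pmf (\<lambda>(y, f). (\<lambda>i. if i \<in> A then f (g i) else d)(x := y)) (pair_pmf (p (g x)) (Pi_pmf B' d p))"
    unfolding PB pmf.map_comp o_def
    apply (intro map_pmf_cong refl)
    subgoal for z by (cases z) (simp only: prod.case snd_conv fst_conv eq)
    done
  also have "\<dots> = map_pmf (\<lambda>(y, h). h(x := y)) (pair_pmf (p (g x)) (map_pmf (\<lambda>f i. if i \<in> A then f (g i) else d) (Pi_pmf B' d p)))"
    by (simp add: pair_map_pmf2 pmf.map_comp o_def case_prod_unfold)
  also have "\<dots> = Pi_pmf (insert x A) d (\<lambda>i. p (g i))"
    unfolding IH by (rule Pi_pmf_insert[symmetric]) (use insert in auto)
  finally show ?case .
qed

lemma Pi_pmf_pair:
  assumes "finite A"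
  shows "map_pmf (\<lambda>(f,h) i. (f i, h i)) (pair_pmf (Pi_pmf A d1 p) (Pi_pmf A d2 q)) =
         Pi_pmf A (d1,d2) (\<lambda>i. pair_pmf (p i) (q i))"
  using assms
proof (induction A rule: finite_induct)
  case empty
  then show ?case by (simp add: pair_return_pmf1 map_pmf_def bind_return_pmf)
next
  case (insert x A)
  let ?P = "Pi_pmf A d1 p" and ?Q = "Pi_pmf A d2 q"
  have "map_pmf (\<lambda>(f,h) i. (f i, h i)) (pair_pmf (Pi_pmf (insert x A) d1 p) (Pi_pmf (insert x A) d2 q))
    = do {y \<leftarrow> p x; f \<leftarrow> ?P; z \<leftarrow> q x; h \<leftarrow> ?Q; return_pmf (\<lambda>i. ((f(x:=y)) i, (h(x:=z)) i))}"
    using insert by (simp add: Pi_pmf_insert' pair_pmf_def map_pmf_def bind_assoc_pmf bind_return_pmf)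
  also have "\<dots> = do {y \<leftarrow> p x; z \<leftarrow> q x; f \<leftarrow> ?P; h \<leftarrow> ?Q; return_pmf (\<lambda>i. ((f(x:=y)) i, (h(x:=z)) i))}"
    by (intro bind_pmf_cong refl bind_commute_pmf)
  also have "\<dots> = do {yz \<leftarrow> pair_pmf (p x) (q x); F \<leftarrow> map_pmf (\<lambda>(f,h) i. (f i, h i)) (pair_pmf ?P ?Q); return_pmf (F(x:=yz))}"
    apply (simp add: pair_pmf_def map_pmf_def bind_assoc_pmf bind_return_pmf)
    apply (intro bind_pmf_cong refl arg_cong[where f=return_pmf])
    apply (auto simp: fun_eq_iff)
    done
  also have "\<dots> = Pi_pmf (insert x A) (d1,d2) (\<lambda>i. pair_pmf (p i) (q i))"
    using insert by (simp add: Pi_pmf_insert')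
  finally show ?case .
qed

lemma bern_xor:
  assumes "0 \<le> a" "a \<le> 1" "0 \<le> b" "b \<le> 1"
  shows "map_pmf (\<lambda>(x,y). x \<noteq> y) (pair_pmf (bernoulli_pmf a) (bernoulli_pmf b)) =
         bernoulli_pmf (a*(1-b)+(1-a)*b)"
proof -
  have r: "0 \<le> a*(1-b)+(1-a)*b" "a*(1-b)+(1-a)*b \<le> 1"
    using assms by (auto intro!: add_nonneg_nonneg mult_nonneg_nonneg)
      (smt (verit) mult_left_le mult_nonneg_nonneg)
  show ?thesis
  proof (rule pmf_eqI)
    fix c :: bool
    have "map_pmf (\<lambda>(x,y). x \<noteq> y) (pair_pmf (bernoulli_pmf a) (bernoulli_pmf b)) =
          bernoulli_pmf a \<bind> (\<lambda>x. bernoulli_pmf b \<bind> (\<lambda>y. return_pmf (x \<noteq> y)))"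
      by (simp add: pair_pmf_def map_pmf_def bind_assoc_pmf bind_return_pmf)
    then show "pmf (map_pmf (\<lambda>(x,y). x \<noteq> y) (pair_pmf (bernoulli_pmf a) (bernoulli_pmf b))) c =
       pmf (bernoulli_pmf (a*(1-b)+(1-a)*b)) c"
      using assms r by (cases c) (simp_all add: pmf_bind pmf_return algebra_simps)
  qed
qed

lemma flip_dist:
  assumes A: "A \<subseteq> {1..K}" and t: "t \<in> {1..n}"
    and rg: "\<And>i. i \<in> A \<Longrightarrow> 0 \<le> ps i \<and> ps i \<le> 1 \<and> 0 \<le> pd i \<and> pd i \<le> 1"
  shows "map_pmf (\<lambda>(w,z,e) i. if i \<in> A then z (t,i) \<noteq> e (t+1,i) else False) (net_pmf K n ps pd)
       = Pi_pmf A False (\<lambda>i. bernoulli_pmf (p_end ps pd i))"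
proof -
  define I where "I = {1..n+1} \<times> {1..K}"
  define Z where "Z = Pi_pmf I False (\<lambda>(t,i). bernoulli_pmf (ps i))"
  define E where "E = Pi_pmf I False (\<lambda>(t,i). bernoulli_pmf (pd i))"
  define pr :: "nat \<Rightarrow> (nat \<times> nat \<Rightarrow> bool) \<Rightarrow> nat \<Rightarrow> bool"
    where "pr s z = (\<lambda>i. if i \<in> A then z (s,i) else False)" for s z
  define X :: "(nat \<Rightarrow> bool) \<times> (nat \<Rightarrow> bool) \<Rightarrow> nat \<Rightarrow> bool" where "X = (\<lambda>(f,h) i. f i \<noteq> h i)"
  have finA: "finite A" using A finite_subset by blast
  have prZ: "map_pmf (pr t) Z = Pi_pmf A False (\<lambda>i. bernoulli_pmf (ps i))"
    unfolding pr_def Z_def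
    by (subst Pi_pmf_proj_aux[where g="\<lambda>i. (t,i)"]) (use A t finA in \<open>auto simp: I_def inj_on_def\<close>)
  have prE: "map_pmf (pr (t+1)) E = Pi_pmf A False (\<lambda>i. bernoulli_pmf (pd i))"
    unfolding pr_def E_def
    by (subst Pi_pmf_proj_aux[where g="\<lambda>i. (t+1,i)"]) (use A t finA in \<open>auto simp: I_def inj_on_def\<close>)
  have "map_pmf (\<lambda>(w,z,e) i. if i \<in> A then z (t,i) \<noteq> e (t+1,i) else False) (net_pmf K n ps pd)
      = map_pmf (X \<circ> (\<lambda>(z,e). (pr t z, pr (t+1) e))) (map_pmf snd (net_pmf K n ps pd))"
    unfolding pmf.map_comp by (intro map_pmf_cong refl) (auto simp: X_def pr_def fun_eq_iff)
  also have "map_pmf snd (net_pmf K n ps pd) = pair_pmf Z E"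
    unfolding net_pmf_def Z_def E_def I_def by (rule map_snd_pair_pmf)
  also have "map_pmf (X \<circ> (\<lambda>(z,e). (pr t z, pr (t+1) e))) (pair_pmf Z E)
       = map_pmf X (pair_pmf (map_pmf (pr t) Z) (map_pmf (pr (t+1)) E))"
    by (simp add: map_pair[symmetric] pmf.map_comp)
  also have "\<dots> = map_pmf X (pair_pmf (Pi_pmf A False (\<lambda>i. bernoulli_pmf (ps i))) (Pi_pmf A False (\<lambda>i. bernoulli_pmf (pd i))))"
    by (simp only: prZ prE)
  also have "\<dots> = map_pmf (\<lambda>k. (\<lambda>(a,b). a \<noteq> b) \<circ> k) (map_pmf (\<lambda>(f,h) i. (f i, h i))
       (pair_pmf (Pi_pmf A False (\<lambda>i. bernoulli_pmf (ps i))) (Pi_pmf A False (\<lambda>i. bernoulli_pmf (pd i)))))"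
    by (simp add: pmf.map_comp X_def o_def case_prod_unfold)
  also have "\<dots> = map_pmf (\<lambda>k. (\<lambda>(a,b). a \<noteq> b) \<circ> k) (Pi_pmf A (False,False) (\<lambda>i. pair_pmf (bernoulli_pmf (ps i)) (bernoulli_pmf (pd i))))"
    by (simp add: Pi_pmf_pair finA)
  also have "\<dots> = Pi_pmf A False (\<lambda>i. map_pmf (\<lambda>(a,b). a \<noteq> b) (pair_pmf (bernoulli_pmf (ps i)) (bernoulli_pmf (pd i))))"
    by (rule Pi_pmf_map[symmetric]) (auto simp: finA)
  also have "\<dots> = Pi_pmf A False (\<lambda>i. bernoulli_pmf (p_end ps pd i))"
    apply (intro Pi_pmf_cong refl)
    subgoal for i using rg[of i] bern_xor[of "ps i" "pd i"] by (simp add: p_end_def)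
    done
  finally show ?thesis .
qed

lemma p_end_le: "0 \<le> (a::real) \<Longrightarrow> a \<le> 1/2 \<Longrightarrow> 0 \<le> (b::real) \<Longrightarrow> b \<le> 1/2 \<Longrightarrow>
   0 \<le> a * (1 - b) + (1 - a) * b \<and> a * (1 - b) + (1 - a) * b \<le> 1/2"
proof -
  assume h: "0 \<le> a" "a \<le> 1/2" "0 \<le> b" "b \<le> 1/2"
  have "0 \<le> (1/2 - a) * (1/2 - b)" using h by (intro mult_nonneg_nonneg) auto
  moreover have "0 \<le> a * (1 - b)" "0 \<le> (1 - a) * b" using h by auto
  ultimately show ?thesis by (auto simp: algebra_simps)
qed

lemma bit_err_bound:
  assumes A: "A \<subseteq> {1..K}" and ne: "A \<noteq> {}" and t: "t \<in> {1..n}"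
    and rg: "\<And>i. i \<in> A \<Longrightarrow> 0 \<le> ps i \<and> ps i \<le> 1/2 \<and> 0 \<le> pd i \<and> pd i \<le> 1/2"
  shows "bit_error K n ps pd (\<lambda>y. card A < 2 * card {i\<in>A. y i}) t
     \<le> exp (-2 * real (card A) * (1/2 - Max (p_end ps pd ` A))\<^sup>2)"
proof -
  have finA: "finite A" using A finite_subset by blast
  define F where "F = (\<lambda>(w::nat\<Rightarrow>bool,z::nat\<times>nat\<Rightarrow>bool,e::nat\<times>nat\<Rightarrow>bool) i. if i \<in> A then z (t,i) \<noteq> e (t+1,i) else False)"
  define S where "S = {f::nat\<Rightarrow>bool. card A \<le> 2 * card {i\<in>A. f i}}"
  define P where "P = Pi_pmf A False (\<lambda>i. bernoulli_pmf (p_end ps pd i))"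
  define mx where "mx = Max (p_end ps pd ` A)"
  define mu where "mu = (\<Sum>i\<in>A. p_end ps pd i)"
  define e where "e = real (card A) / 2 - mu"
  have pe: "0 \<le> p_end ps pd i \<and> p_end ps pd i \<le> 1/2" if "i \<in> A" for i
    using rg[OF that] p_end_le unfolding p_end_def by blast
  have mxi: "p_end ps pd i \<le> mx" if "i \<in> A" for i
    unfolding mx_def using finA that by (intro Max_ge) auto
  have mxh: "mx \<le> 1/2" unfolding mx_def using finA ne pe by (subst Max_le_iff) auto
  have "mu \<le> (\<Sum>i\<in>A. mx)" unfolding mu_def by (intro sum_mono mxi)
  hence mu: "mu \<le> real (card A) * mx" by simp
  have e1: "real (card A) * (1/2 - mx) \<le> e" using mu by (simp add: e_def algebra_simps)
  have e0: "0 \<le> real (card A) * (1/2 - mx)" using mxh by simp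
  have sub: "{(w, z, ee). (card A < 2 * card {i\<in>A. received K w z ee t i}) \<noteq> w t} \<subseteq> F -` S"
  proof
    fix x assume "x \<in> {(w, z, ee). (card A < 2 * card {i\<in>A. received K w z ee t i}) \<noteq> w t}"
    then obtain w z ee where x: "x = (w,z,ee)" and 
      h: "(card A < 2 * card {i\<in>A. received K w z ee t i}) \<noteq> w t" by auto
    have rc: "received K w z ee t i = (w t \<noteq> F (w,z,ee) i)" if "i \<in> A" for i
      using that A t by (auto simp: received_def dest_in_def relay_out_def relay_in_def src_sig_def F_def)
    have eqs: "{i\<in>A. received K w z ee t i} = {i\<in>A. w t \<noteq> F (w,z,ee) i}"
      using rc by auto
    show "x \<in> F -` S"
    proof (cases "w t")
      case False
      then show ?thesis using h eqs by (simp add: S_def x)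
    next
      case True
      have "{i\<in>A. \<not> F (w,z,ee) i} = A - {i\<in>A. F (w,z,ee) i}" by auto
      hence c: "card {i\<in>A. \<not> F (w,z,ee) i} = card A - card {i\<in>A. F (w,z,ee) i}"
        using finA by (simp add: card_Diff_subset)
      have "card {i\<in>A. F (w,z,ee) i} \<le> card A" using finA by (intro card_mono) auto
      then show ?thesis using h eqs True c by (simp add: S_def x)
    qed
  qed
  have "bit_error K n ps pd (\<lambda>y. card A < 2 * card {i\<in>A. y i}) t \<le> measure_pmf.prob (net_pmf K n ps pd) (F -` S)"
    unfolding bit_error_def by (rule measure_pmf.finite_measure_mono[OF sub]) simp
  also have "\<dots> = measure_pmf.prob (map_pmf F (net_pmf K n ps pd)) S" by simp
  also have "map_pmf F (net_pmf K n ps pd) = P"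
    unfolding F_def P_def by (rule flip_dist) (use A t in auto, (metis rg order_trans field_sum_of_halves le_add_same_cancel2)+)
  also have "measure_pmf.prob P S \<le> measure_pmf.prob P {f. mu + e \<le> real (card {i\<in>A. f i})}"
    by (rule measure_pmf.finite_measure_mono) (auto simp: S_def e_def)
  also have "\<dots> \<le> exp (-2*e\<^sup>2/ real (card A))"
    unfolding P_def mu_def by (rule hoeff_bern) (use finA ne e0 e1 in auto, use pe in fastforce, use pe in fastforce)
  also have "\<dots> \<le> exp (-2 * real (card A) * (1/2 - mx)\<^sup>2)"
  proof -
    have cp: "real (card A) > 0" using finA ne by (simp add: card_gt_0_iff)
    have "(real (card A) * (1/2 - mx))\<^sup>2 \<le> e\<^sup>2" using e0 e1 by (intro power_mono) auto
    hence "real (card A) * (real (card A) * (1/2 - mx)\<^sup>2) \<le> e\<^sup>2"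
      by (simp add: power_mult_distrib power2_eq_square mult_ac)
    hence "real (card A) * (1/2 - mx)\<^sup>2 \<le> e\<^sup>2 / real (card A)"
      using cp by (simp add: field_simps)
    thus ?thesis by simp
  qed
  finally show ?thesis unfolding mx_def .
qed

theorem corollary3:
  fixes ps pd :: "nat \<Rightarrow> nat \<Rightarrow> real"
  assumes ps_range: "\<And>K i. i \<in> {1..K} \<Longrightarrow> 0 \<le> ps K i \<and> ps K i \<le> 1/2"
    and pd_range: "\<And>K i. i \<in> {1..K} \<Longrightarrow> 0 \<le> pd K i \<and> pd K i \<le> 1/2"
    and M: "\<exists>M :: nat \<Rightarrow> nat set. (\<forall>K. M K \<subseteq> {1..K}) \<and>
             filterlim (\<lambda>K. real (card (M K)) *
                 (1/2 - Max ((\<lambda>m. p_end (ps K) (pd K) m) ` M K))\<^sup>2) at_top sequentially"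
  shows "\<forall>\<epsilon>>0. \<forall>R<1. \<exists>N K0. \<forall>n\<ge>N. \<forall>K\<ge>K0.
           R \<le> real n / real (n + 1) \<and>
           (\<exists>dec. avg_error K n (ps K) (pd K) dec \<le> \<epsilon>)"
proof (intro allI impI)
  fix \<epsilon> R :: real
  assume eps: "\<epsilon> > 0" and R: "R < 1"
  obtain Mf where Msub: "\<And>K. Mf K \<subseteq> {1..K}" and lim: "filterlim (\<lambda>K. real (card (Mf K)) *
                 (1/2 - Max ((\<lambda>m. p_end (ps K) (pd K) m) ` Mf K))\<^sup>2) at_top sequentially"
    using M by blast
  define f where "f = (\<lambda>K. real (card (Mf K)) * (1/2 - Max ((\<lambda>m. p_end (ps K) (pd K) m) ` Mf K))\<^sup>2)"
  define L where "L = max 1 (- ln \<epsilon> / 2)"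
  have "eventually (\<lambda>K. L \<le> f K) sequentially"
    using lim unfolding f_def filterlim_at_top by blast
  then obtain K0 where K0: "\<And>K. K \<ge> K0 \<Longrightarrow> L \<le> f K" unfolding eventually_sequentially by blast
  define N where "N = nat \<lceil>1 / (1 - R)\<rceil>"
  have rate: "R \<le> real n / real (n + 1)" if "n \<ge> N" for n
  proof -
    have "real n \<ge> 1 / (1 - R)" using that unfolding N_def by linarith
    hence "real n * (1 - R) \<ge> 1" using R by (simp add: field_simps)
    hence "R * (real n + 1) \<le> real n" using R by (simp add: algebra_simps)
    thus ?thesis by (simp add: field_simps)
  qed
  have main: "\<exists>dec. avg_error K n (ps K) (pd K) dec \<le> \<epsilon>" if n: "n \<ge> N" and K: "K \<ge> K0" for n K
  proof -
    have fK: "L \<le> f K" using K0 K .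
    have ne: "Mf K \<noteq> {}"
    proof
      assume "Mf K = {}"
      hence "f K = 0" by (simp add: f_def)
      thus False using fK by (simp add: L_def)
    qed
    have exp_le: "exp (-2 * f K) \<le> \<epsilon>"
    proof -
      have "-2 * f K \<le> ln \<epsilon>" using fK by (simp add: L_def)
      hence "exp (-2 * f K) \<le> exp (ln \<epsilon>)" by simp
      thus ?thesis using eps by simp
    qed
    let ?dec = "\<lambda>y. card (Mf K) < 2 * card {i\<in>Mf K. y i}"
    have be: "bit_error K n (ps K) (pd K) ?dec t \<le> \<epsilon>" if t: "t \<in> {1..n}" for t
    proof -
      have "bit_error K n (ps K) (pd K) ?dec t
          \<le> exp (-2 * real (card (Mf K)) * (1/2 - Max (p_end (ps K) (pd K) ` Mf K))\<^sup>2)"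
        using bit_err_bound[OF Msub[of K] ne t, of "ps K" "pd K"] Msub[of K] ps_range[of _ K] pd_range[of _ K]
        by (meson subsetD)
      also have "\<dots> = exp (-2 * f K)" by (simp add: f_def)
      finally show ?thesis using exp_le by simp
    qed
    have "avg_error K n (ps K) (pd K) ?dec \<le> \<epsilon>"
    proof (cases "n = 0")
      case True thus ?thesis using eps by (simp add: avg_error_def)
    next
      case False
      have "(\<Sum>t = 1..n. bit_error K n (ps K) (pd K) ?dec t) \<le> (\<Sum>t = 1..n. \<epsilon>)"
        by (intro sum_mono be) auto
      hence "(\<Sum>t = 1..n. bit_error K n (ps K) (pd K) ?dec t) \<le> real n * \<epsilon>" by simp
      thus ?thesis using False unfolding avg_error_def by (simp add: divide_le_eq mult.commute)
    qed
    thus "\<exists>dec. avg_error K n (ps K) (pd K) dec \<le> \<epsilon>" by blast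
  qed
  show "\<exists>N K0. \<forall>n\<ge>N. \<forall>K\<ge>K0. R \<le> real n / real (n + 1) \<and>
           (\<exists>dec. avg_error K n (ps K) (pd K) dec \<le> \<epsilon>)"
    using main rate by blast
qed

end
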